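(* Let $d$ be an even positive integer and $s$ a positive integer with $2s\leqslant d$. For every $\varepsilon,\gamma\in I^s\setminus\{\alpha,\omega\}$, $$ \mathrm{diam}(B_\varepsilon,B_\gamma)\leqslant\min\{d-s-\langle\varepsilon,\gamma\rangle,\ d-s-\langle\bar\varepsilon,\bar\gamma\rangle\}. $$
   Context: Let $I=\{0,1\}$; for binary vectors $|x|=\sum_i x_i$, $\langle x,y\rangle=\sum_i x_iy_i$, and $\bar x=(1-x_1,\ldots,1-x_n)$. For $x,y\in I^n$, $\mathrm{dist}(x,y)$ is the Hamming distance, and for $A,B\subseteq I^n$, $\mathrm{diam}(A,B)=\max\{\mathrm{dist}(a,b)\colon a\in A,b\in B\}$. Let $\alpha=(0,\ldots,0)$, $\omega=(1,\ldots,1)\in I^s$. For $\varepsilon\in I^s\setminus\{\alpha,\omega\}$ let $i=t(\varepsilon)$ be the unique index with $\varepsilon_i\neq\varepsilon_{i+1}=\cdots=\varepsilon_s$, and $A_\varepsilon=\{\varepsilon_1\}\times\cdots\times\{\varepsilon_i\}\times I^{s-1-i}\subseteq I^{s-1}$. Define subsets of $I^{d-s}$: $X_0=\{x\colon |x|\leqslant \frac d2-s\}$; $X_k=\{x\colon |x|=\frac d2-s+k\}$ for $0<k<s$; $X_s=\{x\colon |x|\geqslant \frac d2\}$. For $\varepsilon\in I^s\setminus\{\alpha,\omega\}$ set $B_\varepsilon=X_{|\varepsilon|}\cap(I^{d-2s+1}\times A_\varepsilon)$, where $I^{d-s}=I^{d-2s+1}\times I^{s-1}$. *)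

theory Defs
  imports Main
begin

text \<open>Binary vectors of length n are lists over {0,1} (as nat) of length n;
  coordinate i (1-indexed in the paper) is list position i-1.\<close>

definition binvec :: "nat \<Rightarrow> nat list set" where
  "binvec n = {x. length x = n \<and> set x \<subseteq> {0, 1}}"

definition wt :: "nat list \<Rightarrow> nat" where
  "wt x = sum_list x"

definition ip :: "nat list \<Rightarrow> nat list \<Rightarrow> nat" where
  "ip x y = sum_list (map2 (*) x y)"

definition compl :: "nat list \<Rightarrow> nat list" where
  "compl x = map (\<lambda>a. 1 - a) x"

definition hdist :: "nat list \<Rightarrow> nat list \<Rightarrow> nat" where
  "hdist x y = card {i. i < length x \<and> x ! i \<noteq> y ! i}"

definition diam :: "nat list set \<Rightarrow> nat list set \<Rightarrow> nat" where
  "diam A B = Max {hdist a b | a b. a \<in> A \<and> b \<in> B}"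

text \<open>t(e): the unique (1-indexed) i with e_i \<noteq> e_{i+1} = ... = e_s.
  In 0-indexed list positions: e!(i-1) \<noteq> e!i and e!j = e!i for i \<le> j < s.\<close>
definition tidx :: "nat list \<Rightarrow> nat" where
  "tidx e = (THE i. 0 < i \<and> i < length e \<and> e ! (i - 1) \<noteq> e ! i \<and>
                     (\<forall>j. i \<le> j \<and> j < length e \<longrightarrow> e ! j = e ! i))"

text \<open>A_e = {e_1} x ... x {e_i} x I^(s-1-i), a subset of I^(s-1).\<close>
definition Aset :: "nat \<Rightarrow> nat list \<Rightarrow> nat list set" where
  "Aset s e = {v \<in> binvec (s - 1). take (tidx e) v = take (tidx e) e}"

definition Xset :: "nat \<Rightarrow> nat \<Rightarrow> nat \<Rightarrow> nat list set" where
  "Xset d s k = {x \<in> binvec (d - s).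
      (if k = 0 then wt x \<le> d div 2 - s
       else if k < s then wt x = d div 2 - s + k
       else d div 2 \<le> wt x)}"

text \<open>B_e = X_{|e|} \<inter> (I^(d-2s+1) x A_e), with I^(d-s) = I^(d-2s+1) x I^(s-1).\<close>
definition Bset :: "nat \<Rightarrow> nat \<Rightarrow> nat list \<Rightarrow> nat list set" where
  "Bset d s e = {x \<in> Xset d s (wt e). drop (d - 2 * s + 1) x \<in> Aset s e}"

end

theory Submission
  imports Defs
begin


lemma bin_nth: "x \<in> binvec n \<Longrightarrow> p < n \<Longrightarrow> x!p = 0 \<or> x!p = 1"
  unfolding binvec_def using nth_mem by fastforce

lemma bin_len: "x \<in> binvec n \<Longrightarrow> length x = n"
  unfolding binvec_def by simp

lemma wt_sum: "wt x = (\<Sum>p=0..<length x. x!p)"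
  unfolding wt_def by (rule sum_list_sum_nth)

lemma ip_sum: "length x = length y \<Longrightarrow> ip x y = (\<Sum>p=0..<length x. x!p * y!p)"
  unfolding ip_def by (simp add: sum_list_sum_nth)

lemma compl_len[simp]: "length (compl e) = length e" by (simp add: compl_def)
lemma compl_nth[simp]: "p < length e \<Longrightarrow> compl e ! p = 1 - e!p" by (simp add: compl_def)

lemma hdist_sum: "hdist x y = (\<Sum>p=0..<length x. if x!p \<noteq> y!p then 1 else 0)"
proof -
  have "{i. i < length x \<and> x ! i \<noteq> y ! i} = {0..<length x} \<inter> {p. x!p \<noteq> y!p}" by auto
  then show ?thesis unfolding hdist_def by (simp add: sum.If_cases)
qed

lemma hdist_sym: "length x = length y \<Longrightarrow> hdist x y = hdist y x"
  unfolding hdist_def by (metis)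

lemma ip_sym: "length x = length y \<Longrightarrow> ip x y = ip y x"
  by (simp add: ip_sum mult.commute)

lemma hdist_le: "hdist x y \<le> length x"
proof -
  have "{i. i < length x \<and> x ! i \<noteq> y ! i} \<subseteq> {..<length x}" by auto
  then show ?thesis unfolding hdist_def by (metis card_lessThan card_mono finite_lessThan)
qed

lemma tidx_props:
  assumes "e \<in> binvec s" "e \<noteq> replicate s 0" "e \<noteq> replicate s 1"
  shows "0 < tidx e \<and> tidx e < s \<and> e!(tidx e - 1) \<noteq> e!(tidx e) \<and>
         (\<forall>j. tidx e \<le> j \<and> j < s \<longrightarrow> e!j = e!(tidx e))"
proof -
  let ?P = "\<lambda>i. 0 < i \<and> i < length e \<and> e!(i-1) \<noteq> e!i \<and> (\<forall>j. i \<le> j \<and> j < length e \<longrightarrow> e!j = e!i)"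
  have len: "length e = s" using assms(1) by (simp add: binvec_def)
  have s0: "s > 0" using assms len by (cases s) auto
  define Q where "Q i \<longleftrightarrow> (\<forall>j. i \<le> j \<and> j < s \<longrightarrow> e!j = e!(s-1))" for i
  have Qs: "Q (s-1)" unfolding Q_def
  proof (intro allI impI)
    fix j assume "s - 1 \<le> j \<and> j < s"
    then have "j = s - 1" by arith
    then show "e!j = e!(s-1)" by simp
  qed
  define i where "i = (LEAST i. Q i)"
  have Qi: "Q i" unfolding i_def by (rule LeastI[of Q, OF Qs])
  have il: "i \<le> s - 1" unfolding i_def by (rule Least_le[of Q, OF Qs])
  have i0: "i \<noteq> 0"
  proof
    assume "i = 0"
    then have all: "\<forall>j<s. e!j = e!(s-1)" using Qi unfolding Q_def by blast
    have "e!(s-1) = 0 \<or> e!(s-1) = 1" using bin_nth[OF assms(1)] s0 by auto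
    then show False
    proof
      assume "e!(s-1) = 0"
      then have "e = replicate s 0"
      proof (intro nth_equalityI)
        show "length e = length (replicate s 0)" using len by simp
        fix p assume "p < length e"
        then have "e!p = e!(s-1)" using all len by blast
        then show "e!p = replicate s 0 ! p" using \<open>e!(s-1) = 0\<close> \<open>p < length e\<close> len by simp
      qed
      then show False using assms by simp
    next
      assume "e!(s-1) = 1"
      then have "e = replicate s 1"
      proof (intro nth_equalityI)
        show "length e = length (replicate s 1)" using len by simp
        fix p assume "p < length e"
        then have "e!p = e!(s-1)" using all len by blast
        then show "e!p = replicate s 1 ! p" using \<open>e!(s-1) = 1\<close> \<open>p < length e\<close> len by simp
      qed
      then show False using assms by simp
    qed
  qed
  have "i - 1 < i" using i0 by simp
  then have nQ: "\<not> Q (i-1)" using not_less_Least[of "i-1" Q] unfolding i_def by blast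
  then obtain j where j: "i-1 \<le> j" "j < s" "e!j \<noteq> e!(s-1)" unfolding Q_def by auto
  have "j = i - 1"
  proof (rule ccontr)
    assume "j \<noteq> i - 1"
    then have "i \<le> j" using j i0 by arith
    then show False using j Qi unfolding Q_def by blast
  qed
  then have ji: "e!(i-1) \<noteq> e!(s-1)" using j by simp
  have "i < s" using il s0 by arith
  then have eis: "e!i = e!(s-1)" using Qi unfolding Q_def by blast
  have Pi: "?P i"
  proof (intro conjI allI impI)
    show "0 < i" using i0 by simp
    show "i < length e" using il s0 len by arith
    show "e!(i-1) \<noteq> e!i" using ji eis by simp
    fix k assume "i \<le> k \<and> k < length e"
    then have "e!k = e!(s-1)" using Qi len unfolding Q_def by blast
    then show "e!k = e!i" using eis by simp
  qed
  have A: "False" if Pa: "?P a" and Pb: "?P b" and ab: "a < b" for a b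
  proof -
    have "a \<le> b - 1" "b - 1 < length e" using ab Pb by arith+
    then have 1: "e!(b-1) = e!a" using Pa by blast
    have "a \<le> b" "b < length e" using ab Pb by arith+
    then have 2: "e!b = e!a" using Pa by blast
    have "e!(b-1) \<noteq> e!b" using Pb by blast
    then show False using 1 2 by simp
  qed
  have uniq: "k = i" if "?P k" for k
    using A[of k i] A[of i k] Pi that by (meson linorder_neqE_nat)
  have "?P (tidx e)" unfolding tidx_def by (rule theI[of ?P i, OF Pi uniq]) blast
  then show ?thesis unfolding len by blast
qed



lemma core:
  fixes N off m :: nat and x y :: "nat list"
  assumes x: "x \<in> binvec N" and y: "y \<in> binvec N" and om: "off + m \<le> N"
  shows "hdist x y + (\<Sum>p=0..<m. x!(off+p) * y!(off+p)) + (\<Sum>p=0..<m. (1 - x!(off+p)) * (1 - y!(off+p))) \<le> N"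
    "hdist x y + 2 * (\<Sum>p=0..<m. x!(off+p) * y!(off+p)) \<le> wt x + wt y"
    "hdist x y + 2 * (\<Sum>p=0..<m. (1 - x!(off+p)) * (1 - y!(off+p))) + wt x + wt y \<le> 2 * N"
proof -
  have lx: "length x = N" and ly: "length y = N" using x y by (simp_all add: bin_len)
  define D where "D p = (if x!p \<noteq> y!p then 1 else (0::nat))" for p
  define T1 where "T1 = (\<Sum>p=0..<N. x!p * y!p)"
  define T0 where "T0 = (\<Sum>p=0..<N. (1 - x!p) * (1 - y!p))"
  have H: "hdist x y = (\<Sum>p=0..<N. D p)" unfolding D_def hdist_sum lx ..
  have wx: "wt x = (\<Sum>p=0..<N. x!p)" unfolding wt_sum lx ..
  have wy: "wt y = (\<Sum>p=0..<N. y!p)" unfolding wt_sum ly ..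
  have pw1: "D p + x!p * y!p + (1 - x!p) * (1 - y!p) = 1" if "p \<in> {0..<N}" for p
    using bin_nth[OF x, of p] bin_nth[OF y, of p] that unfolding D_def by auto
  have pw2: "D p + 2 * (x!p * y!p) = x!p + y!p" if "p \<in> {0..<N}" for p
    using bin_nth[OF x, of p] bin_nth[OF y, of p] that unfolding D_def by auto
  have E1: "hdist x y + T1 + T0 = N"
  proof -
    have "hdist x y + T1 + T0 = (\<Sum>p=0..<N. D p + x!p * y!p + (1 - x!p) * (1 - y!p))"
      unfolding H T1_def T0_def by (simp add: sum.distrib)
    also have "\<dots> = (\<Sum>p=0..<N. 1)" using pw1 by (rule sum.cong[OF refl])
    finally show ?thesis by simp
  qed
  have E2: "hdist x y + 2 * T1 = wt x + wt y"
  proof -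
    have "hdist x y + 2 * T1 = (\<Sum>p=0..<N. D p + 2 * (x!p * y!p))"
      unfolding H T1_def by (simp add: sum.distrib sum_distrib_left)
    also have "\<dots> = (\<Sum>p=0..<N. x!p + y!p)" using pw2 by (rule sum.cong[OF refl])
    finally show ?thesis unfolding wx wy by (simp add: sum.distrib)
  qed
  have shift: "(\<Sum>p=0..<m. f (off+p)) \<le> (\<Sum>p=0..<N. f p)" for f :: "nat \<Rightarrow> nat"
  proof -
    have "(\<Sum>p=0..<m. f (off+p)) = (\<Sum>q=off..<off+m. f q)"
      using sum.shift_bounds_nat_ivl[of f 0 off m] by (simp add: add.commute)
    also have "\<dots> \<le> (\<Sum>p=0..<N. f p)" by (rule sum_mono2) (use om in auto)
    finally show ?thesis .
  qed
  have Ob: "(\<Sum>p=0..<m. x!(off+p) * y!(off+p)) \<le> T1" unfolding T1_def by (rule shift)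
  have Z: "(\<Sum>p=0..<m. (1 - x!(off+p)) * (1 - y!(off+p))) \<le> T0" unfolding T0_def by (rule shift)
  show "hdist x y + (\<Sum>p=0..<m. x!(off+p) * y!(off+p)) + (\<Sum>p=0..<m. (1 - x!(off+p)) * (1 - y!(off+p))) \<le> N"
    using E1 Ob Z by linarith
  show "hdist x y + 2 * (\<Sum>p=0..<m. x!(off+p) * y!(off+p)) \<le> wt x + wt y"
    using E2 Ob by linarith
  show "hdist x y + 2 * (\<Sum>p=0..<m. (1 - x!(off+p)) * (1 - y!(off+p))) + wt x + wt y \<le> 2 * N"
    using E1 E2 Z by linarith
qed

lemma split_sum: "(i::nat) \<le> s \<Longrightarrow> (\<Sum>p=0..<s. f p) = (\<Sum>p=0..<i. f p) + (\<Sum>p=i..<s. (f p::nat))"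
  using sum.atLeastLessThan_concat[of 0 i s f] by simp

lemma half:
  fixes N s i off h c :: nat and x y e g :: "nat list"
  assumes x: "x \<in> binvec N" and y: "y \<in> binvec N" and e: "e \<in> binvec s" and g: "g \<in> binvec s"
    and iS: "i < s" and oi: "off + i \<le> N"
    and pre: "\<forall>p<i. x!(off+p) = e!p \<and> y!(off+p) = g!p"
    and tail: "\<forall>p. i \<le> p \<and> p < s \<longrightarrow> e!p = c" and c: "c = 0 \<or> c = 1"
    and wx: "wt x = h - s + wt e" and wy: "wt y = h - s + wt g" and N: "N = 2*h - s" and sh: "s \<le> h"
  shows "hdist x y \<le> N - ip e g \<and> hdist x y \<le> N - ip (compl e) (compl g)"
proof -
  have le: "length e = s" and lg: "length g = s" using e g by (simp_all add: bin_len)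
  define Ob where "Ob = (\<Sum>p=0..<i. e!p * g!p)"
  define Z where "Z = (\<Sum>p=0..<i. (1 - e!p) * (1 - g!p))"
  define WE where "WE = (\<Sum>p=0..<i. e!p)"
  define WG where "WG = (\<Sum>p=0..<i. g!p)"
  define G1 where "G1 = (\<Sum>p=i..<s. g!p)"
  define G0 where "G0 = (\<Sum>p=i..<s. 1 - g!p)"
  have OO: "(\<Sum>p=0..<i. x!(off+p) * y!(off+p)) = Ob" unfolding Ob_def
    by (rule sum.cong) (use pre in auto)
  have ZZ: "(\<Sum>p=0..<i. (1 - x!(off+p)) * (1 - y!(off+p))) = Z" unfolding Z_def
    by (rule sum.cong) (use pre in auto)
  note cr = core[OF x y oi, unfolded OO ZZ]
  have ebin: "\<And>p. p < s \<Longrightarrow> e!p = 0 \<or> e!p = 1" using bin_nth[OF e] .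
  have gbin: "\<And>p. p < s \<Longrightarrow> g!p = 0 \<or> g!p = 1" using bin_nth[OF g] .
  have tl: "e!p = c" if "p \<in> {i..<s}" for p using tail that by auto
  have G: "G0 + G1 = s - i"
  proof -
    have "G0 + G1 = (\<Sum>p=i..<s. (1 - g!p) + g!p)" unfolding G0_def G1_def by (simp add: sum.distrib)
    also have "\<dots> = (\<Sum>p=i..<s. 1)" by (rule sum.cong[OF refl]) (use gbin in force)
    finally show ?thesis by simp
  qed
  have we: "wt e = WE + c * (s - i)"
  proof -
    have "wt e = WE + (\<Sum>p=i..<s. e!p)" unfolding wt_sum le WE_def using iS by (simp add: split_sum)
    also have "(\<Sum>p=i..<s. e!p) = (\<Sum>p=i..<s. c)" by (rule sum.cong[OF refl]) (use tl in auto)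
    finally show ?thesis by simp
  qed
  have wg: "wt g = WG + G1" unfolding wt_sum lg WG_def G1_def using iS by (simp add: split_sum)
  have ipeg: "ip e g = Ob + c * G1"
  proof -
    have "ip e g = Ob + (\<Sum>p=i..<s. e!p * g!p)" unfolding ip_sum[OF le[folded lg]] le Ob_def using iS by (simp add: split_sum)
    also have "(\<Sum>p=i..<s. e!p * g!p) = (\<Sum>p=i..<s. c * g!p)" by (rule sum.cong[OF refl]) (use tl in auto)
    finally show ?thesis unfolding G1_def by (simp add: sum_distrib_left)
  qed
  have ipc: "ip (compl e) (compl g) = Z + (1 - c) * G0"
  proof -
    have "ip (compl e) (compl g) = (\<Sum>p=0..<s. (1 - e!p) * (1 - g!p))"
      by (simp add: ip_sum le lg)
    also have "\<dots> = Z + (\<Sum>p=i..<s. (1 - e!p) * (1 - g!p))" unfolding Z_def using iS by (simp add: split_sum)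
    also have "(\<Sum>p=i..<s. (1 - e!p) * (1 - g!p)) = (\<Sum>p=i..<s. (1 - c) * (1 - g!p))" by (rule sum.cong[OF refl]) (use tl in auto)
    finally show ?thesis unfolding G0_def by (simp add: sum_distrib_left)
  qed
  have key: "WE + WG + Z = i + Ob"
  proof -
    have "WE + WG + Z = (\<Sum>p=0..<i. e!p + g!p + (1 - e!p) * (1 - g!p))"
      unfolding WE_def WG_def Z_def by (simp add: sum.distrib)
    also have "\<dots> = (\<Sum>p=0..<i. 1 + e!p * g!p)"
    proof (rule sum.cong[OF refl])
      fix p assume "p \<in> {0..<i}"
      then have "p < s" using iS by simp
      then show "e!p + g!p + (1 - e!p) * (1 - g!p) = 1 + e!p * g!p" using ebin[of p] gbin[of p] by auto
    qed
    also have "\<dots> = (\<Sum>p=0..<i. 1) + Ob" unfolding Ob_def by (rule sum.distrib)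
    finally show ?thesis by simp
  qed
  have hs: "h - s + s = h" using sh by simp
  have Ns: "N + s = 2*h" using N sh by simp
  have si: "s - i + i = s" using iS by simp
  note cr1 = cr(1) and cr2 = cr(2) and cr3 = cr(3)
  have B1: "hdist x y + ip e g \<le> N"
  proof (cases "c = 0")
    case True
    then have "ip e g = Ob" using ipeg by simp
    then show ?thesis using cr1 by linarith
  next
    case False
    then have c1: "c = 1" using c by simp
    then have "ip e g = Ob + G1" "wt e = WE + (s - i)" using ipeg we by simp_all
    then show ?thesis using cr3 key G wg wx wy hs Ns si by linarith
  qed
  have B2: "hdist x y + ip (compl e) (compl g) \<le> N"
  proof (cases "c = 0")
    case True
    then have "ip (compl e) (compl g) = Z + G0" "wt e = WE" using ipc we by simp_all
    then show ?thesis using cr2 key G wg wx wy hs Ns si by linarith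
  next
    case False
    then have c1: "c = 1" using c by simp
    then have "ip (compl e) (compl g) = Z" using ipc by simp
    then show ?thesis using cr1 by linarith
  qed
  show ?thesis using B1 B2 by linarith
qed



lemma tidx_struct:
  assumes e: "e \<in> binvec s" "e \<noteq> replicate s 0" "e \<noteq> replicate s 1"
  obtains c where "0 < tidx e" "tidx e < s" "c = 0 \<or> c = 1"
    "\<forall>p. tidx e \<le> p \<and> p < s \<longrightarrow> e!p = c" "e!(tidx e - 1) \<noteq> c"
proof -
  note tp = tidx_props[OF e]
  obtain c where cd: "c = e!(tidx e)" by blast
  have "tidx e < s" using tp by blast
  then have "c = 0 \<or> c = 1" using bin_nth[OF e(1), of "tidx e"] cd by simp
  moreover have "\<forall>p. tidx e \<le> p \<and> p < s \<longrightarrow> e!p = c" using tp cd by blast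
  moreover have "e!(tidx e - 1) \<noteq> c" using tp cd by blast
  ultimately show ?thesis using that tp by blast
qed

lemma wt_bounds:
  assumes e: "e \<in> binvec s" "e \<noteq> replicate s 0" "e \<noteq> replicate s 1"
  shows "0 < wt e" "wt e < s"
proof -
  obtain c where t: "0 < tidx e" "tidx e < s" "c = 0 \<or> c = 1"
    "\<forall>p. tidx e \<le> p \<and> p < s \<longrightarrow> e!p = c" "e!(tidx e - 1) \<noteq> c"
    using tidx_struct[OF e] by blast
  have ts: "tidx e \<le> tidx e \<and> tidx e < s" using t(2) by simp
  have ec: "e!(tidx e) = c" using t(4) ts by blast
  have i1: "tidx e - 1 < s" using t(2) by arith
  have b: "e!(tidx e - 1) = 0 \<or> e!(tidx e - 1) = 1" using bin_nth[OF e(1) i1] .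
  have le: "length e = s" using e bin_len by blast
  obtain p1 p0 where p1: "p1 < s" "e!p1 = 1" and p0: "p0 < s" "e!p0 = 0"
  proof (cases "c = 0")
    case True
    then have "e!(tidx e - 1) = 1" using b t(5) by auto
    then show ?thesis using that[of "tidx e - 1" "tidx e"] i1 t(2) ec True by simp
  next
    case False
    then have "c = 1" "e!(tidx e - 1) = 0" using b t(3,5) by auto
    then show ?thesis using that[of "tidx e" "tidx e - 1"] i1 t(2) ec by simp
  qed
  have "e!p1 \<le> (\<Sum>p=0..<s. e!p)" by (rule member_le_sum) (use p1 in auto)
  then show "0 < wt e" unfolding wt_sum le using p1 by simp
  have "(\<Sum>p=0..<s. e!p) < (\<Sum>p=0..<s. 1)"
  proof (rule sum_strict_mono_ex1)
    show "\<forall>x\<in>{0..<s}. e!x \<le> 1" using bin_nth[OF e(1)] by fastforce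
    show "\<exists>a\<in>{0..<s}. e!a < 1" using p0 by auto
  qed simp
  then show "wt e < s" unfolding wt_sum le by simp
qed

lemma memB:
  assumes e: "e \<in> binvec s" "e \<noteq> replicate s 0" "e \<noteq> replicate s 1"
    and ds: "2 * s \<le> d" and x: "x \<in> Bset d s e"
  shows "x \<in> binvec (d - s)" "wt x = d div 2 - s + wt e"
    "\<forall>p<tidx e. x!(d - 2*s + 1 + p) = e!p"
proof -
  have w: "0 < wt e" "wt e < s" using wt_bounds[OF e] by auto
  have xX: "x \<in> Xset d s (wt e)" and xA: "drop (d - 2 * s + 1) x \<in> Aset s e"
    using x unfolding Bset_def by auto
  show xb: "x \<in> binvec (d - s)" using xX unfolding Xset_def by auto
  show "wt x = d div 2 - s + wt e" using xX w unfolding Xset_def by auto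
  have ti: "tidx e < s" using tidx_props[OF e] by blast
  have le: "length e = s" using e bin_len by blast
  have lx: "length x = d - s" using xb bin_len by blast
  have tk: "take (tidx e) (drop (d - 2 * s + 1) x) = take (tidx e) e" using xA unfolding Aset_def by blast
  show "\<forall>p<tidx e. x!(d - 2*s + 1 + p) = e!p"
  proof (intro allI impI)
    fix p assume p: "p < tidx e"
    have "take (tidx e) (drop (d - 2 * s + 1) x) ! p = drop (d - 2 * s + 1) x ! p" using p by simp
    also have "\<dots> = x!(d - 2*s + 1 + p)" using lx ds ti by (intro nth_drop) arith
    finally have "x!(d - 2*s + 1 + p) = take (tidx e) e ! p" using tk by simp
    then show "x!(d - 2*s + 1 + p) = e!p" using p by simp
  qed
qed

lemma Bne:
  assumes e: "e \<in> binvec s" "e \<noteq> replicate s 0" "e \<noteq> replicate s 1"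
    and ds: "2 * s \<le> d" and ev: "even d"
  shows "\<exists>x. x \<in> Bset d s e"
proof -
  obtain c where t: "0 < tidx e" "tidx e < s" "c = 0 \<or> c = 1"
    "\<forall>p. tidx e \<le> p \<and> p < s \<longrightarrow> e!p = c" "e!(tidx e - 1) \<noteq> c"
    using tidx_struct[OF e] by blast
  define i where "i = tidx e"
  define h where "h = d div 2"
  define L where "L = d - 2 * s + 1"
  define a where "a = h - s + c"
  have hd: "d = 2 * h" using ev unfolding h_def by simp
  have le: "length e = s" using e bin_len by blast
  have w: "0 < wt e" "wt e < s" using wt_bounds[OF e] by auto
  have aL: "a \<le> L" unfolding a_def L_def using hd ds t(3) by auto
  define z where "z = take i e @ replicate (s - 1 - i) c"
  define x where "x = (replicate a 1 @ replicate (L - a) 0) @ z"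
  have dr: "drop i e = replicate (s - i) c"
  proof (rule nth_equalityI)
    show "length (drop i e) = length (replicate (s - i) c)" using le by simp
    fix p assume "p < length (drop i e)"
    then have p: "p < s - i" using le by simp
    have "drop i e ! p = e!(i + p)" using le t(2) i_def by simp
    also have "\<dots> = c" using t(4) p i_def by auto
    finally show "drop i e ! p = replicate (s - i) c ! p" using p by simp
  qed
  have we: "wt e = sum_list (take i e) + c * (s - i)"
  proof -
    have "wt e = sum_list (take i e @ drop i e)" unfolding wt_def by simp
    also have "\<dots> = sum_list (take i e) + c * (s - i)" unfolding dr by (simp add: sum_list_replicate mult.commute)
    finally show ?thesis .
  qed
  have lz: "length z = s - 1" unfolding z_def using le t(2) i_def by simp
  have sz: "set z \<subseteq> {0, 1}" unfolding z_def using e(1) t(3) unfolding binvec_def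
    by (auto dest: in_set_takeD)
  have lx: "length x = d - s" unfolding x_def using lz aL ds t(2) unfolding L_def by simp
  have xb: "x \<in> binvec (d - s)" unfolding binvec_def x_def using lx sz by (auto simp: x_def)
  have wz: "wt z = sum_list (take i e) + c * (s - 1 - i)" unfolding z_def wt_def by (simp add: sum_list_replicate mult.commute)
  have wx: "wt x = a + wt z" unfolding x_def wt_def z_def by (simp add: sum_list_replicate)
  have wx2: "wt x = d div 2 - s + wt e"
    unfolding wx wz we a_def h_def[symmetric] using t(2,3) i_def ds hd by (auto simp: algebra_simps)
  have xX: "x \<in> Xset d s (wt e)" unfolding Xset_def using xb wx2 w by auto
  have dx: "drop L x = z" unfolding x_def using aL by simp
  have zA: "z \<in> Aset s e" unfolding Aset_def binvec_def using lz sz i_def le t(2)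
    by (simp add: z_def)
  show ?thesis using xX zA dx unfolding Bset_def L_def by auto
qed

theorem lemma4:
  fixes d s :: nat and e g :: "nat list"
  assumes "even d" "0 < d" "0 < s" "2 * s \<le> d"
    and "e \<in> binvec s" "e \<noteq> replicate s 0" "e \<noteq> replicate s 1"
    and "g \<in> binvec s" "g \<noteq> replicate s 0" "g \<noteq> replicate s 1"
  shows "diam (Bset d s e) (Bset d s g)
           \<le> min (d - s - ip e g) (d - s - ip (compl e) (compl g))"
proof -
  note E = assms(5,6,7) and G = assms(8,9,10)
  define h where "h = d div 2"
  have hd: "d = 2 * h" using assms(1) unfolding h_def by simp
  have N: "d - s = 2 * h - s" using hd by simp
  have sh: "s \<le> h" using assms(4) hd by simp
  obtain c where te: "0 < tidx e" "tidx e < s" "c = 0 \<or> c = 1"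
    "\<forall>p. tidx e \<le> p \<and> p < s \<longrightarrow> e!p = c" "e!(tidx e - 1) \<noteq> c"
    using tidx_struct[OF E] by blast
  obtain c' where tg: "0 < tidx g" "tidx g < s" "c' = 0 \<or> c' = 1"
    "\<forall>p. tidx g \<le> p \<and> p < s \<longrightarrow> g!p = c'" "g!(tidx g - 1) \<noteq> c'"
    using tidx_struct[OF G] by blast
  have le: "length e = s" "length g = s" using E(1) G(1) bin_len by blast+
  have bound: "hdist x y \<le> min (d - s - ip e g) (d - s - ip (compl e) (compl g))"
    if x: "x \<in> Bset d s e" and y: "y \<in> Bset d s g" for x y
  proof -
    note mx = memB[OF E assms(4) x] and my = memB[OF G assms(4) y]
    have lxy: "length x = length y" using mx(1) my(1) bin_len by metis
    show ?thesis
    proof (cases "tidx e \<le> tidx g")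
      case True
      have pre: "\<forall>p<tidx e. x!(d - 2*s + 1 + p) = e!p \<and> y!(d - 2*s + 1 + p) = g!p"
        using mx(3) my(3) True by auto
      have oi: "d - 2*s + 1 + tidx e \<le> d - s" using te(2) assms(4) by arith
      have "hdist x y \<le> d - s - ip e g \<and> hdist x y \<le> d - s - ip (compl e) (compl g)"
        by (rule half[OF mx(1) my(1) E(1) G(1) te(2) oi pre te(4) te(3) mx(2)[folded h_def] my(2)[folded h_def] N sh])
      then show ?thesis by simp
    next
      case False
      have pre: "\<forall>p<tidx g. y!(d - 2*s + 1 + p) = g!p \<and> x!(d - 2*s + 1 + p) = e!p"
        using mx(3) my(3) False by auto
      have oi: "d - 2*s + 1 + tidx g \<le> d - s" using tg(2) assms(4) by arith
      have "hdist y x \<le> d - s - ip g e \<and> hdist y x \<le> d - s - ip (compl g) (compl e)"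
        by (rule half[OF my(1) mx(1) G(1) E(1) tg(2) oi pre tg(4) tg(3) my(2)[folded h_def] mx(2)[folded h_def] N sh])
      moreover have "hdist y x = hdist x y" using hdist_sym lxy by metis
      moreover have "ip g e = ip e g" using ip_sym le by metis
      moreover have "ip (compl g) (compl e) = ip (compl e) (compl g)" using ip_sym le by simp
      ultimately show ?thesis by simp
    qed
  qed
  let ?S = "{hdist a b | a b. a \<in> Bset d s e \<and> b \<in> Bset d s g}"
  obtain x0 where x0: "x0 \<in> Bset d s e" using Bne[OF E assms(4,1)] by blast
  obtain y0 where y0: "y0 \<in> Bset d s g" using Bne[OF G assms(4,1)] by blast
  have ne: "?S \<noteq> {}" using x0 y0 by blast
  have "?S \<subseteq> {..d}"
  proof
    fix z assume "z \<in> ?S"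
    then obtain a b where z: "z = hdist a b" and a: "a \<in> Bset d s e" by blast
    have "length a = d - s" using memB(1)[OF E assms(4) a] bin_len by blast
    then show "z \<in> {..d}" using hdist_le[of a b] z by simp
  qed
  then have fin: "finite ?S" using finite_subset by blast
  show ?thesis unfolding diam_def using fin ne bound by (subst Max_le_iff) auto
qed

end
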